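(* Let $X$, $d$, $(e_n,e_n^* )$, $\mathbb{P}$, $V$, $F$, $(g_k)$, $(m_k)$, $(\lambda_k)$, $S$ and $T$ be as in the context. Then the $d$-fold direct sum $T_d=T\oplus\cdots\oplus T$ on $X^d$ is not recurrent.
   Context: Let $X$ be a separable infinite-dimensional complex Banach space and $d\in\mathbb{N}$. Let $(e_n,e_n^* )_{n\in\mathbb{N}}\subset X\times X^*$ satisfy: $\mathrm{span}\{e_n\}$ is dense in $X$, $e_n^*(e_m)=\delta_{n,m}$, $\|e_n\|=1$ and $\sup_n\|e_n^*\|<\infty$. Let $V=\mathrm{span}(e_1,\dots,e_d)$ and $\mathbb{P}x=\sum_{i=1}^d e_i^*(x)e_i$. Let $F\subset V$ be asymptotically separated (i.e. there are $g_n\in X^*$ with $\liminf_n|g_n(x)|=0$ for $x\in F$ and $\lim_n|g_n(x)|=\infty$ for $x\in V\setminus F$), with both $F$ and $V\setminus F$ dense in $V$. Let $(m_k)$ be an increasing sequence of positive integers with $m_k\mid m_{k+1}$ for all $k$ and $\sum_{k\ge d+1}\frac{m_{k-2}}{m_{k-1}}\|g_k\|<\infty$. Let $\lambda_k=1$ for $1\le k\le d$ and $\lambda_k=\exp(i\pi/m_k)$ for $k>d$, and let $S$ be the bounded operator on $X$ extending $\sum_{k=1}^\ell x_ke_k\mapsto\sum_{k=1}^\ell\lambda_kx_ke_k$. Define $Tx=Sx+\sum_{k=d+1}^\infty\frac{1}{m_{k-1}}g_k(\mathbb{P}x)e_k$. It is known (Augé) that $T$ is a bounded operator with $\{x:\|T^nx\|\to\infty\}=\mathbb{P}^{-1}(V\setminus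 F)$ and $\mathrm{Rec}(T)=\mathbb{P}^{-1}(F)$, where $\mathrm{Rec}(T)$ is the set of $x$ with $T^{\omega_n}x\to x$ for some strictly increasing sequence $(\omega_n)$ of positive integers. An operator is recurrent if its set of recurrent vectors is dense. *)

theory Defs
  imports "HOL-Analysis.Analysis"
begin

class complex_vector = real_vector +
  fixes scaleC :: "complex \<Rightarrow> 'a \<Rightarrow> 'a" (infixr "*\<^sub>C" 75)
  assumes scaleC_add_right: "a *\<^sub>C (x + y) = a *\<^sub>C x + a *\<^sub>C y"
    and scaleC_add_left: "(a + b) *\<^sub>C x = a *\<^sub>C x + b *\<^sub>C x"
    and scaleC_scaleC: "a *\<^sub>C (b *\<^sub>C x) = (a * b) *\<^sub>C x"
    and scaleC_one: "1 *\<^sub>C x = x"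
    and scaleR_scaleC: "scaleR r x = of_real r *\<^sub>C x"

class complex_normed_vector = complex_vector + real_normed_vector +
  assumes norm_scaleC: "norm (a *\<^sub>C x) = cmod a * norm x"

instantiation complex :: complex_normed_vector
begin
definition scaleC_complex_def: "scaleC (a::complex) (x::complex) = a * x"
instance
  by standard (auto simp: scaleC_complex_def algebra_simps norm_mult scaleR_conv_of_real)
end

text \<open>Bounded complex-linear maps (elements of X* when the codomain is complex,
  bounded operators when the codomain is X).\<close>
definition bounded_clinear :: "('a::complex_normed_vector \<Rightarrow> 'b::complex_normed_vector) \<Rightarrow> bool" where
  "bounded_clinear f \<longleftrightarrow> bounded_linear f \<and> (\<forall>c x. f (c *\<^sub>C x) = c *\<^sub>C f x)"

definition cspan :: "'a::complex_vector set \<Rightarrow> 'a set" where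
  "cspan B = {x. \<exists>I c. finite I \<and> I \<subseteq> B \<and> x = (\<Sum>v\<in>I. c v *\<^sub>C v)}"

text \<open>A vector x of X^d (represented by its components x 0, ..., x (d-1)) is recurrent
  for the d-fold direct sum of T if T_d^(omega n) x tends to x along some strictly
  increasing sequence of positive integers.\<close>
definition dsum_recurrent_vector :: "('a::metric_space \<Rightarrow> 'a) \<Rightarrow> nat \<Rightarrow> (nat \<Rightarrow> 'a) \<Rightarrow> bool" where
  "dsum_recurrent_vector T d x \<longleftrightarrow>
     (\<exists>\<omega>::nat \<Rightarrow> nat. strict_mono \<omega> \<and> (\<forall>n. 0 < \<omega> n) \<and>
        (\<forall>i<d. (\<lambda>n. (T ^^ \<omega> n) (x i)) \<longlonglongrightarrow> x i))"

text \<open>The d-fold direct sum of T is recurrent: its recurrent vectors are dense in X^d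
  (product topology).\<close>
definition dsum_recurrent :: "('a::metric_space \<Rightarrow> 'a) \<Rightarrow> nat \<Rightarrow> bool" where
  "dsum_recurrent T d \<longleftrightarrow>
     (\<forall>y::nat \<Rightarrow> 'a. \<forall>\<epsilon>>0. \<exists>x. dsum_recurrent_vector T d x \<and> (\<forall>i<d. dist (x i) (y i) < \<epsilon>))"

end

theory Submission
  imports Defs
begin

lemma scaleC_zero_left[simp]: "(0::complex) *\<^sub>C (x::'a::complex_vector) = 0"
  by (metis scaleR_scaleC scaleR_zero_left of_real_0)
lemma scaleC_zero_right[simp]: "(a::complex) *\<^sub>C (0::'a::complex_vector) = 0"
  by (metis add_cancel_right_right scaleC_add_right add_0)
lemma scaleC_minus_right: "(a::complex) *\<^sub>C (- x::'a::complex_vector) = - (a *\<^sub>C x)"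
  by (metis add.right_inverse eq_neg_iff_add_eq_0 scaleC_add_right scaleC_zero_right)
lemma scaleC_diff_right: "(a::complex) *\<^sub>C (x - y::'a::complex_vector) = a *\<^sub>C x - a *\<^sub>C y"
  by (metis diff_conv_add_uminus scaleC_add_right scaleC_minus_right)
lemma scaleC_sum_right: "(a::complex) *\<^sub>C (\<Sum>i\<in>I. f i::'a::complex_vector) = (\<Sum>i\<in>I. a *\<^sub>C f i)"
proof (induction I rule: infinite_finite_induct)
  case (insert x F) then show ?case by (simp add: scaleC_add_right)
qed simp_all
lemma scaleC_complex[simp]: "(a::complex) *\<^sub>C (x::complex) = a * x"
  by (simp add: scaleC_complex_def)
lemma bounded_linear_scaleC: "bounded_linear (\<lambda>x::'a::complex_normed_vector. c *\<^sub>C x)"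
proof (rule bounded_linear_intro[where K="cmod c"])
  show "c *\<^sub>C (x + y) = c *\<^sub>C x + c *\<^sub>C y" for x y :: 'a by (rule scaleC_add_right)
  show "c *\<^sub>C (r *\<^sub>R x) = r *\<^sub>R (c *\<^sub>C x)" for r and x :: 'a
    by (simp add: scaleR_scaleC scaleC_scaleC mult.commute)
  show "norm (c *\<^sub>C x) \<le> norm x * cmod c" for x :: 'a by (simp add: norm_scaleC)
qed

lemma clin_add: "bounded_clinear f \<Longrightarrow> f (x + y) = f x + f y"
  unfolding bounded_clinear_def using bounded_linear.linear linear_add by blast
lemma clin_diff: "bounded_clinear f \<Longrightarrow> f (x - y) = f x - f y"
  unfolding bounded_clinear_def using bounded_linear.linear linear_diff by blast
lemma clin_scale: "bounded_clinear f \<Longrightarrow> f (c *\<^sub>C x) = c *\<^sub>C f x"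
  unfolding bounded_clinear_def by blast
lemma clin_sum: "bounded_clinear f \<Longrightarrow> f (\<Sum>i\<in>I. h i) = (\<Sum>i\<in>I. f (h i))"
  unfolding bounded_clinear_def using bounded_linear.linear linear_sum by blast
lemma clin_cont: "bounded_clinear f \<Longrightarrow> continuous_on UNIV f"
  unfolding bounded_clinear_def using linear_continuous_on by blast
lemma clin_bl: "bounded_clinear f \<Longrightarrow> bounded_linear f"
  unfolding bounded_clinear_def by blast

lemma clin_eq_on_closure_cspan:
  assumes f: "bounded_clinear f" and h: "bounded_clinear h"
    and eq: "\<And>v. v \<in> B \<Longrightarrow> f v = h v" and dense: "closure (cspan B) = UNIV"
  shows "f x = h x"
proof -
  have "cspan B \<subseteq> {x. f x = h x}"
  proof
    fix x assume "x \<in> cspan B"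
    then obtain I c where I: "finite I" "I \<subseteq> B" "x = (\<Sum>v\<in>I. c v *\<^sub>C v)"
      unfolding cspan_def by blast
    have "f x = (\<Sum>v\<in>I. c v *\<^sub>C f v)" using I f by (simp add: clin_sum clin_scale)
    also have "\<dots> = (\<Sum>v\<in>I. c v *\<^sub>C h v)" using I eq by (intro sum.cong) auto
    also have "\<dots> = h x" using I h by (simp add: clin_sum clin_scale)
    finally show "x \<in> {x. f x = h x}" by simp
  qed
  moreover have "closed {x. f x = h x}"
    using clin_cont[OF f] clin_cont[OF h] by (intro closed_Collect_eq) auto
  ultimately have "closure (cspan B) \<subseteq> {x. f x = h x}" by (rule closure_minimal)
  then show ?thesis using dense by auto
qed



lemma sin_lower: fixes y :: real assumes "0 \<le> y" "y \<le> 2" shows "y / 3 \<le> sin y"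
proof -
  have "\<bar>sin y - (\<Sum>m<3. sin_coeff m * y ^ m)\<bar> \<le> inverse (fact 3) * \<bar>y\<bar> ^ 3"
    by (rule Maclaurin_sin_bound)
  moreover have "(\<Sum>m<3. sin_coeff m * y ^ m) = y"
    by (simp add: sin_coeff_def numeral_3_eq_3)
  ultimately have h: "\<bar>sin y - y\<bar> * 6 \<le> y ^ 3" using assms by (simp add: fact_numeral)
  have "6 * (y - sin y) \<le> \<bar>sin y - y\<bar> * 6" by (simp add: abs_if)
  then have "6 * (y - sin y) \<le> y ^ 3" using h by (rule order.trans)
  then have "y - y ^ 3 / 6 \<le> sin y" by (simp add: field_simps; linarith)
  moreover have "y ^ 3 \<le> 4 * y"
  proof -
    have "y * y \<le> 2 * 2" using assms by (intro mult_mono) auto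
    then have "y * (y * y) \<le> y * 4" using assms by (intro mult_left_mono) auto
    then show ?thesis by (simp add: power3_eq_cube mult.commute)
  qed
  ultimately show ?thesis by linarith
qed


lemma scaleC_diff_left: "(a - b) *\<^sub>C (x::'a::complex_vector) = a *\<^sub>C x - b *\<^sub>C x"
proof -
  have "(a - b) *\<^sub>C x + b *\<^sub>C x = a *\<^sub>C x" by (simp flip: scaleC_add_left)
  then show ?thesis by (simp add: eq_diff_eq)
qed

locale setting =
  fixes e :: "nat \<Rightarrow> 'a::{complex_normed_vector, banach}"
    and estar :: "nat \<Rightarrow> 'a \<Rightarrow> complex"
    and g :: "nat \<Rightarrow> 'a \<Rightarrow> complex"
    and d :: nat and m :: "nat \<Rightarrow> nat"
    and V F :: "'a set"
    and P S T :: "'a \<Rightarrow> 'a"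
    and lam :: "nat \<Rightarrow> complex"
  assumes d_pos: "1 \<le> d"
    and estar_dual: "\<forall>n\<ge>1. bounded_clinear (estar n)"
    and e_dense: "closure (cspan (e ` {1..})) = UNIV"
    and biorth: "\<forall>n\<ge>1. \<forall>k\<ge>1. estar n (e k) = (if n = k then 1 else 0)"
    and e_norm: "\<forall>n\<ge>1. norm (e n) = 1"
    and estar_bdd: "\<exists>C. \<forall>n\<ge>1. onorm (estar n) \<le> C"
    and V_def: "V = cspan (e ` {1..d})"
    and P_def: "\<forall>x. P x = (\<Sum>i=1..d. estar i x *\<^sub>C e i)"
    and g_dual: "\<forall>n\<ge>1. bounded_clinear (g n)"
    and nonF_sep: "\<forall>x\<in>V - F. filterlim (\<lambda>n. cmod (g n x)) at_top sequentially"
    and nonF_dense: "V \<subseteq> closure (V - F)"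
    and m_pos: "\<forall>k\<ge>1. 0 < m k"
    and m_incr: "\<forall>k\<ge>1. m k < m (Suc k)"
    and m_sum: "summable (\<lambda>k. real (m (k + d - 1)) / real (m (k + d)) * onorm (g (k + d + 1)))"
    and lam_def: "\<forall>k. lam k = (if k \<le> d then 1 else exp (\<i> * of_real pi / of_nat (m k)))"
    and S_bdd: "bounded_clinear S"
    and S_diag: "\<forall>k\<ge>1. S (e k) = lam k *\<^sub>C e k"
    and T_def: "\<forall>x. T x = S x + (\<Sum>k. (if d + 1 \<le> k then (1 / of_nat (m (k - 1))) * g k (P x) else 0) *\<^sub>C e k)"
begin

definition coef :: "nat \<Rightarrow> 'a \<Rightarrow> complex" where
  "coef k x = (if d + 1 \<le> k then (1 / of_nat (m (k - 1))) * g k (P x) else 0)"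

lemma estar_C: "\<exists>C. C \<ge> 1 \<and> (\<forall>n\<ge>1. \<forall>y. cmod (estar n y) \<le> C * norm y)"
proof -
  obtain C where C: "\<forall>n\<ge>1. onorm (estar n) \<le> C" using estar_bdd by blast
  have "cmod (estar n y) \<le> max C 1 * norm y" if "n \<ge> 1" for n y
  proof -
    have "cmod (estar n y) \<le> onorm (estar n) * norm y"
      using onorm clin_bl estar_dual that by blast
    also have "\<dots> \<le> max C 1 * norm y"
      using C that by (intro mult_right_mono) auto
    finally show ?thesis .
  qed
  then show ?thesis by (intro exI[of _ "max C 1"]) auto
qed

lemma m_mono: "1 \<le> i \<Longrightarrow> i \<le> j \<Longrightarrow> m i \<le> m j"
proof (induction j)
  case (Suc j) then show ?case
    using m_incr by (cases "i = Suc j") (auto simp: le_Suc_eq intro: order.trans[OF _ less_imp_le])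
qed simp

lemma m_strict: "1 \<le> i \<Longrightarrow> i < j \<Longrightarrow> m i < m j"
proof -
  assume a: "1 \<le> i" "i < j"
  have "m i < m (Suc i)" using m_incr a by blast
  also have "\<dots> \<le> m j" using m_mono[of "Suc i" j] a by simp
  finally show ?thesis .
qed

lemma m_ge: "1 \<le> k \<Longrightarrow> k \<le> m k"
proof (induction k)
  case (Suc k)
  show ?case
  proof (cases "k = 0")
    case True then show ?thesis using m_pos by (simp add: Suc_le_eq)
  next
    case False
    then have "k \<le> m k" "m k < m (Suc k)" using Suc m_incr by auto
    then show ?thesis by simp
  qed
qed simp

lemma m_ge2: "d + 1 \<le> k \<Longrightarrow> 2 \<le> m k"
  using m_ge[of k] d_pos by simp

lemma estar_e: "n \<ge> 1 \<Longrightarrow> k \<ge> 1 \<Longrightarrow> estar n (e k) = (if n = k then 1 else 0)"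
  using biorth by blast

lemma estar_S: assumes "n \<ge> 1" shows "estar n (S x) = lam n * estar n x"
proof -
  have cl: "bounded_clinear (estar n)" using estar_dual assms by blast
  have cl1: "bounded_clinear (\<lambda>x. estar n (S x))"
    using cl S_bdd unfolding bounded_clinear_def
    by (auto intro: bounded_linear_compose)
  have cl2: "bounded_clinear (\<lambda>x. lam n * estar n x)"
    using cl bounded_linear_compose[OF bounded_linear_mult_right[of "lam n"]] unfolding bounded_clinear_def
    by (auto simp: mult.left_commute)
  show ?thesis
  proof (rule clin_eq_on_closure_cspan[OF cl1 cl2 _ e_dense])
    fix v assume "v \<in> e ` {1..}"
    then obtain k where k: "k \<ge> 1" "v = e k" by auto
    then show "estar n (S v) = lam n * estar n v"
      using S_diag clin_scale[OF cl] estar_e[OF assms k(1)] by auto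
  qed
qed

lemma T_eq: "T x = S x + (\<Sum>k. coef k x *\<^sub>C e k)"
  using T_def by (simp add: coef_def)

lemma series_summable: "summable (\<lambda>k. coef k x *\<^sub>C e k)"
proof -
  let ?f = "\<lambda>k. coef k x *\<^sub>C e k"
  let ?h = "\<lambda>j. norm (P x) * (real (m (j + d - 1)) / real (m (j + d)) * onorm (g (j + d + 1)))"
  have hs: "summable ?h" using m_sum by (rule summable_mult)
  have "summable (\<lambda>j. norm (?f (j + (d + 1))))"
  proof (rule summable_comparison_test'[OF hs, of 1])
    fix j :: nat assume j: "j \<ge> 1"
    define k where "k = j + (d + 1)"
    have k1: "k - 1 = j + d" and k2: "k - 2 = j + d - 1" using k_def by auto
    have "k - 2 \<ge> 1" using j d_pos k_def by simp
    then have "m (k - 2) > 0" using m_pos by blast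
    then have mk2: "real (m (k - 2)) \<ge> 1" by simp
    have "k - 1 \<ge> 1" using j d_pos k_def by simp
    then have "m (k - 1) > 0" using m_pos by blast
    then have mk1: "real (m (k - 1)) > 0" by simp
    have "k \<ge> 1" using k_def by simp
    then have ne: "norm (e k) = 1" and gcl: "bounded_clinear (g k)" using e_norm g_dual by blast+
    have gb: "cmod (g k (P x)) \<le> onorm (g k) * norm (P x)"
      by (rule onorm[OF clin_bl[OF gcl]])
    have on: "onorm (g k) \<ge> 0" by (rule onorm_pos_le[OF clin_bl[OF gcl]])
    have "norm (?f k) = cmod (g k (P x)) / real (m (k - 1))"
      using k_def ne by (simp add: coef_def norm_scaleC norm_divide norm_mult)
    also have "\<dots> \<le> onorm (g k) * norm (P x) / real (m (k - 1))"
      using gb mk1 by (simp add: divide_right_mono)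
    also have "\<dots> \<le> onorm (g k) * norm (P x) * real (m (k - 2)) / real (m (k - 1))"
    proof -
      have ab: "onorm (g k) * norm (P x) \<ge> 0" using on by simp
      have "onorm (g k) * norm (P x) * 1 \<le> onorm (g k) * norm (P x) * real (m (k - 2))"
        by (rule mult_left_mono[OF mk2 ab])
      then show ?thesis using mk1 by (simp add: divide_right_mono)
    qed
    also have "\<dots> = ?h j" using k1 k2 k_def by (simp add: field_simps)
    finally show "norm (norm (?f (j + (d + 1)))) \<le> ?h j" using k_def by simp
  qed
  then have "summable (\<lambda>k. norm (?f k))" by (rule iffD1[OF summable_iff_shift])
  then show ?thesis by (rule summable_norm_cancel)
qed

lemma estar_T: assumes n: "n \<ge> 1" shows "estar n (T x) = lam n * estar n x + coef n x"
proof -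
  have cl: "bounded_clinear (estar n)" using estar_dual n by blast
  have "(\<lambda>k. estar n (coef k x *\<^sub>C e k)) = (\<lambda>k. if k = n then coef n x else 0)"
  proof
    fix k show "estar n (coef k x *\<^sub>C e k) = (if k = n then coef n x else 0)"
    proof (cases "k = 0")
      case True then show ?thesis using n d_pos linear_0[OF bounded_linear.linear[OF clin_bl[OF cl]]] by (simp add: coef_def)
    next
      case False then show ?thesis using clin_scale[OF cl] estar_e[OF n, of k] by auto
    qed
  qed
  then have "estar n (\<Sum>k. coef k x *\<^sub>C e k) = coef n x"
    using bounded_linear.suminf[OF clin_bl[OF cl] series_summable] sums_single[of n "\<lambda>_. coef n x"]
    by (simp add: sums_iff)
  then show ?thesis using T_eq clin_add[OF cl] estar_S[OF n] by simp
qed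

lemma P_T: "P (T x) = P x"
proof -
  have "estar i (T x) = estar i x" if "i \<in> {1..d}" for i
  proof -
    have "lam i = 1" using lam_def that by simp
    moreover have "coef i x = 0" using that by (simp add: coef_def)
    ultimately show ?thesis using estar_T[of i x] that by simp
  qed
  then have "(\<Sum>i=1..d. estar i (T x) *\<^sub>C e i) = (\<Sum>i=1..d. estar i x *\<^sub>C e i)"
    by (intro sum.cong) auto
  then show ?thesis using P_def by metis
qed

lemma P_Tn: "P ((T ^^ n) x) = P x"
  by (induction n) (auto simp: P_T)


lemma estar_cl: "n \<ge> 1 \<Longrightarrow> bounded_clinear (estar n)"
  using estar_dual by blast

lemma P_add: "P (x + y) = P x + P y"
proof -
  have "P (x + y) = (\<Sum>i=1..d. estar i x *\<^sub>C e i + estar i y *\<^sub>C e i)"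
    using P_def clin_add[OF estar_cl] by (simp add: scaleC_add_left)
  then show ?thesis using P_def by (simp add: sum.distrib)
qed

lemma P_scale: "P (c *\<^sub>C x) = c *\<^sub>C P x"
proof -
  have "P (c *\<^sub>C x) = (\<Sum>i=1..d. c *\<^sub>C (estar i x *\<^sub>C e i))"
    using P_def clin_scale[OF estar_cl] by (simp add: scaleC_scaleC)
  then show ?thesis using P_def by (simp add: scaleC_sum_right)
qed

lemma coef_add: "coef k (x + y) = coef k x + coef k y"
proof (cases "d + 1 \<le> k")
  case True
  then have "bounded_clinear (g k)" using g_dual by simp
  then show ?thesis using True by (simp add: coef_def P_add clin_add distrib_left)
qed (simp add: coef_def)

lemma coef_scale: "coef k (c *\<^sub>C x) = c * coef k x"
proof (cases "d + 1 \<le> k")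
  case True
  then have "bounded_clinear (g k)" using g_dual by simp
  then show ?thesis using True by (simp add: coef_def P_scale clin_scale)
qed (simp add: coef_def)

lemma T_add: "T (x + y) = T x + T y"
proof -
  have "(\<Sum>k. coef k (x + y) *\<^sub>C e k) = (\<Sum>k. coef k x *\<^sub>C e k + coef k y *\<^sub>C e k)"
    by (simp add: coef_add scaleC_add_left)
  also have "\<dots> = (\<Sum>k. coef k x *\<^sub>C e k) + (\<Sum>k. coef k y *\<^sub>C e k)"
    by (rule suminf_add[symmetric, OF series_summable series_summable])
  finally show ?thesis using T_eq clin_add[OF S_bdd] by (simp add: algebra_simps)
qed

lemma T_scale: "T (c *\<^sub>C x) = c *\<^sub>C T x"
proof -
  have "(\<Sum>k. coef k (c *\<^sub>C x) *\<^sub>C e k) = (\<Sum>k. c *\<^sub>C (coef k x *\<^sub>C e k))"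
    by (simp add: coef_scale scaleC_scaleC)
  also have "\<dots> = c *\<^sub>C (\<Sum>k. coef k x *\<^sub>C e k)"
    by (rule bounded_linear.suminf[symmetric, OF bounded_linear_scaleC series_summable])
  finally show ?thesis using T_eq clin_scale[OF S_bdd] by (simp add: scaleC_add_right)
qed

lemma T_zero: "T 0 = 0"
  using T_scale[of 0 0] by simp

lemma Tn_add: "(T ^^ n) (x + y) = (T ^^ n) x + (T ^^ n) y"
  by (induction n) (auto simp: T_add)

lemma Tn_scale: "(T ^^ n) (c *\<^sub>C x) = c *\<^sub>C (T ^^ n) x"
  by (induction n) (auto simp: T_scale)

lemma Tn_zero: "(T ^^ n) 0 = 0"
  by (induction n) (auto simp: T_zero)

lemma Tn_sum: "(T ^^ n) (\<Sum>i\<in>I. c i *\<^sub>C z i) = (\<Sum>i\<in>I. c i *\<^sub>C (T ^^ n) (z i))"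
proof (induction I rule: infinite_finite_induct)
  case (insert a I) then show ?case by (simp add: Tn_add Tn_scale)
qed (simp_all add: Tn_zero)

lemma coef_Tn: "coef k ((T ^^ n) x) = coef k x"
  by (simp add: coef_def P_Tn)

lemma estar_Tn_rec: assumes k: "k \<ge> 1"
  shows "estar k ((T ^^ Suc n) x) = lam k * estar k ((T ^^ n) x) + coef k x"
  using estar_T[OF k, of "(T ^^ n) x"] coef_Tn by simp

lemma lam_form: assumes "d + 1 \<le> k" shows "lam k = exp (\<i> * of_real (pi / real (m k)))"
  using lam_def assms by simp

lemma closed_form: assumes k: "d + 1 \<le> k" and l1: "lam k \<noteq> 1"
  shows "estar k ((T ^^ n) x) - estar k x
     = (lam k ^ n - 1) * (estar k x + coef k x / (lam k - 1))"
proof -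
  define B where "B = estar k x + coef k x / (lam k - 1)"
  have k1: "k \<ge> 1" using k by simp
  have l: "lam k - 1 \<noteq> 0" using l1 by simp
  have eB: "(lam k - 1) * estar k x + coef k x = (lam k - 1) * B"
    using l unfolding B_def by (simp add: field_simps)
  have "estar k ((T ^^ n) x) - estar k x = (lam k ^ n - 1) * B"
  proof (induction n)
    case (Suc n)
    have "estar k ((T ^^ Suc n) x) - estar k x
        = lam k * (estar k ((T ^^ n) x) - estar k x) + ((lam k - 1) * estar k x + coef k x)"
      using estar_Tn_rec[OF k1] by (simp add: algebra_simps)
    also have "\<dots> = lam k * ((lam k ^ n - 1) * B) + (lam k - 1) * B" using Suc eB by simp
    also have "\<dots> = (lam k ^ Suc n - 1) * B" by (simp add: algebra_simps)
    finally show ?case .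
  qed simp
  then show ?thesis unfolding B_def .
qed


lemma lam_pow: assumes k: "d + 1 \<le> k"
  shows "lam k ^ N = exp (\<i> * of_real (real N * (pi / real (m k))))"
proof -
  have "lam k ^ N = exp (\<i> * of_real (pi / real (m k))) ^ N"
    unfolding lam_form[OF k] ..
  also have "\<dots> = exp (of_nat N * (\<i> * of_real (pi / real (m k))))"
    by (rule exp_of_nat_mult[symmetric])
  also have "of_nat N * (\<i> * of_real (pi / real (m k))) = \<i> * of_real (real N * (pi / real (m k)))"
    by simp
  finally show ?thesis .
qed

lemma lam_minus1: assumes k: "d + 1 \<le> k"
  shows "cmod (lam k - 1) \<le> pi / real (m k)" "0 < cmod (lam k - 1)"
proof -
  let ?t = "pi / real (m k)"
  have mk: "real (m k) \<ge> 2" using m_ge2[OF k] by simp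
  have t0: "0 < ?t" using mk by simp
  have t1: "?t \<le> pi / 2" using mk by (intro divide_left_mono) auto
  have eq: "cmod (lam k - 1) = 2 * \<bar>sin (?t / 2)\<bar>"
    unfolding lam_form[OF k] by (rule dist_exp_i_1)
  show "cmod (lam k - 1) \<le> ?t" using eq abs_sin_x_le_abs_x[of "?t/2"] t0 by simp
  have "0 < sin (?t / 2)" using t0 t1 by (intro sin_gt_zero) auto
  then show "0 < cmod (lam k - 1)" using eq by simp
qed

lemma lamN_lower: assumes k: "d + 1 \<le> k" and N: "N \<le> m k"
  shows "real N * (pi / real (m k)) / 3 \<le> cmod (lam k ^ N - 1)"
proof -
  let ?y = "real N * (pi / real (m k)) / 2"
  have mk: "real (m k) \<ge> 2" using m_ge2[OF k] by simp
  have y0: "0 \<le> ?y" by simp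
  have "real N * (pi / real (m k)) \<le> real (m k) * (pi / real (m k))"
    using N by (intro mult_right_mono) auto
  also have "\<dots> = pi" using mk by simp
  finally have h: "real N * (pi / real (m k)) \<le> pi" .
  have "\<And>X::real. X \<le> pi \<Longrightarrow> X / 2 \<le> 2" using pi_less_4 by linarith
  then have y2: "?y \<le> 2" using h by blast
  have eq: "cmod (lam k ^ N - 1) = 2 * \<bar>sin ?y\<bar>"
    unfolding lam_pow[OF k] by (rule dist_exp_i_1)
  have "?y / 3 \<le> sin ?y" by (rule sin_lower[OF y0 y2])
  then show ?thesis using eq by simp
qed

lemma lamN_upper: assumes k: "d + 1 \<le> k" shows "cmod (lam k ^ N - 1) \<le> 2"
proof -
  have "cmod (lam k ^ N - 1) \<le> cmod (lam k ^ N) + cmod 1" by (rule norm_triangle_ineq4)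
  also have "cmod (lam k ^ N) = 1" using lam_pow[OF k] by simp
  finally show ?thesis by simp
qed

lemma gap:
  assumes C1: "\<forall>n\<ge>1. \<forall>y. cmod (estar n y) \<le> C1 * norm y"
    and k: "d + 2 \<le> k" and N1: "m (k - 1) \<le> N" and N2: "N \<le> m k"
  shows "cmod (g k (P x)) / 3 - 2 * C1 * norm x \<le> C1 * norm ((T ^^ N) x - x)"
proof -
  have kd: "d + 1 \<le> k" and k1: "k \<ge> 1" using k by auto
  define L where "L = cmod (lam k - 1)"
  define t where "t = pi / real (m k)"
  define A where "A = cmod (lam k ^ N - 1)"
  define a0 where "a0 = estar k x"
  define c where "c = coef k x"
  have L0: "0 < L" and Lt: "L \<le> t" using lam_minus1[OF kd] unfolding L_def t_def by auto
  have l1: "lam k \<noteq> 1" using L0 unfolding L_def by auto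
  have mk1: "real (m (k - 1)) > 0" using m_pos k by auto
  have t0: "t > 0" using m_ge2[OF kd] unfolding t_def by simp
  have A1: "real N * t / 3 \<le> A" using lamN_lower[OF kd N2] unfolding A_def t_def .
  have A2: "A \<le> 2" using lamN_upper[OF kd] unfolding A_def .
  have A0: "0 \<le> A" unfolding A_def by simp
  have cc: "cmod c = cmod (g k (P x)) / real (m (k - 1))"
    unfolding c_def coef_def using kd by (simp add: norm_mult norm_divide)
  have a0b: "cmod a0 \<le> C1 * norm x" using C1 k1 unfolding a0_def by blast
  have "cmod (estar k ((T ^^ N) x) - estar k x) = A * cmod (a0 + c / (lam k - 1))"
    using closed_form[OF kd l1, of N x] unfolding A_def a0_def c_def by (simp add: norm_mult)
  also have "cmod (a0 + c / (lam k - 1)) \<ge> cmod c / L - cmod a0"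
  proof -
    have "cmod (c / (lam k - 1)) \<le> cmod (a0 + c / (lam k - 1)) + cmod a0"
      using norm_triangle_ineq4[of "a0 + c / (lam k - 1)" a0] by (simp add: norm_minus_commute)
    then show ?thesis unfolding L_def by (simp add: norm_divide)
  qed
  then have "A * cmod (a0 + c / (lam k - 1)) \<ge> A * (cmod c / L - cmod a0)"
    using A0 by (intro mult_left_mono)
  finally have E1: "A * (cmod c / L - cmod a0) \<le> cmod (estar k ((T ^^ N) x) - estar k x)" .
  have "A * (cmod c / L) \<ge> (real N * t / 3) * (cmod c / t)"
  proof (rule mult_mono[OF A1])
    show "cmod c / t \<le> cmod c / L" using L0 Lt by (intro divide_left_mono) auto
  qed (use L0 A0 t0 in auto)
  moreover have "(real N * t / 3) * (cmod c / t) = real N * cmod c / 3" using t0 by simp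
  moreover have "real N * cmod c \<ge> cmod (g k (P x))"
  proof -
    have "real N * cmod c \<ge> real (m (k - 1)) * cmod c" using N1 by (intro mult_right_mono) auto
    then show ?thesis using cc mk1 by simp
  qed
  moreover have "A * cmod a0 \<le> 2 * (C1 * norm x)"
    using A2 a0b A0 by (intro mult_mono) auto
  ultimately have E2: "cmod (g k (P x)) / 3 - 2 * C1 * norm x \<le> A * (cmod c / L - cmod a0)"
    by (simp add: right_diff_distrib)
  have "cmod (estar k ((T ^^ N) x) - estar k x) = cmod (estar k ((T ^^ N) x - x))"
    using clin_diff[OF estar_cl[OF k1]] by simp
  also have "\<dots> \<le> C1 * norm ((T ^^ N) x - x)" using C1 k1 by blast
  finally show ?thesis using E1 E2 by linarith
qed


lemma e_inj: "inj_on e {1..}"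
proof (rule inj_onI)
  fix i j assume "i \<in> {1..}" "j \<in> {1..}" "e i = e j"
  then have "estar i (e i) = estar i (e j)" by simp
  then show "i = j" using estar_e \<open>i \<in> {1..}\<close> \<open>j \<in> {1..}\<close> by (auto split: if_splits)
qed

lemma P_in_V: "P x \<in> V"
proof -
  have inj: "inj_on e {1..d}" using e_inj by (rule inj_on_subset) auto
  define c where "c = (\<lambda>v. estar (inv_into {1..d} e v) x)"
  have "(\<Sum>v\<in>e ` {1..d}. c v *\<^sub>C v) = (\<Sum>i=1..d. c (e i) *\<^sub>C e i)"
    using sum.reindex[OF inj] by simp
  also have "\<dots> = P x" using P_def inv_into_f_f[OF inj] unfolding c_def by simp
  finally have calc: "(\<Sum>v\<in>e ` {1..d}. c v *\<^sub>C v) = P x" .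
  show ?thesis unfolding V_def cspan_def mem_Collect_eq
    by (rule exI[of _ "e ` {1..d}"], rule exI[of _ c]) (use calc in simp)
qed

lemma escape: assumes nF: "P x \<notin> F" shows "\<exists>N0. \<forall>N\<ge>N0. 1 \<le> norm ((T ^^ N) x - x)"
proof -
  obtain C1 where C1ge: "C1 \<ge> 1" and C1: "\<forall>n\<ge>1. \<forall>y. cmod (estar n y) \<le> C1 * norm y"
    using estar_C by blast
  have "P x \<in> V - F" using P_in_V nF by simp
  then have lim: "filterlim (\<lambda>n. cmod (g n (P x))) at_top sequentially" using nonF_sep by blast
  define M where "M = 3 * (2 * C1 * norm x + C1)"
  have "eventually (\<lambda>k. M \<le> cmod (g k (P x))) sequentially"
    using lim by (simp add: filterlim_at_top)
  then obtain K0 where K0: "\<And>k. k \<ge> K0 \<Longrightarrow> M \<le> cmod (g k (P x))"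
    unfolding eventually_sequentially by blast
  define K where "K = max K0 (d + 2)"
  define N0 where "N0 = max (m (d + 1)) (Max (m ` {..K}))"
  have "1 \<le> norm ((T ^^ N) x - x)" if N: "N \<ge> N0" for N
  proof -
    let ?Q = "\<lambda>k. d + 1 \<le> k \<and> N < m k"
    have ex: "\<exists>k. ?Q k"
    proof
      show "?Q (N + d + 1)" using m_ge[of "N + d + 1"] by simp
    qed
    define k where "k = (LEAST k. ?Q k)"
    have Qk: "?Q k" unfolding k_def by (rule LeastI_ex[OF ex])
    have "m (d + 1) \<le> N" using N unfolding N0_def by simp
    then have kd: "k \<noteq> d + 1" using Qk by auto
    then have k2: "d + 2 \<le> k" using Qk by simp
    have "\<not> ?Q (k - 1)" unfolding k_def by (rule not_less_Least) (use k2 k_def in simp)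
    moreover have "d + 1 \<le> k - 1" using k2 by simp
    ultimately have mk1: "m (k - 1) \<le> N" by simp
    have kK: "k \<ge> K0"
    proof (rule ccontr)
      assume "\<not> k \<ge> K0"
      then have "k \<in> {..K}" unfolding K_def by simp
      then have "m k \<le> Max (m ` {..K})" by simp
      also have "\<dots> \<le> N" using N unfolding N0_def by simp
      finally show False using Qk by simp
    qed
    have "cmod (g k (P x)) / 3 - 2 * C1 * norm x \<le> C1 * norm ((T ^^ N) x - x)"
      using gap[OF C1 k2 mk1 less_imp_le[OF conjunct2[OF Qk]]] .
    moreover have "M \<le> cmod (g k (P x))" using K0 kK by blast
    moreover have aux: "\<And>a Y Z M C::real. a/3 - 2*Y \<le> Z \<Longrightarrow> M \<le> a \<Longrightarrow> M = 3*(2*Y + C) \<Longrightarrow> C \<le> Z"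
      by (simp add: field_simps)
    ultimately have "C1 * 1 \<le> C1 * norm ((T ^^ N) x - x)"
      using aux[of "cmod (g k (P x))" "C1 * norm x" "C1 * norm ((T ^^ N) x - x)" M C1] M_def
      by (simp add: mult.assoc)
    then show ?thesis using C1ge mult_le_cancel_left_pos[of C1 1] by simp
  qed
  then show ?thesis by blast
qed

lemma not_rec: assumes nF: "P x \<notin> F" and sm: "strict_mono \<omega>"
  and lim: "(\<lambda>n. (T ^^ \<omega> n) x) \<longlonglongrightarrow> x" shows False
proof -
  obtain N0 where N0: "\<And>N. N \<ge> N0 \<Longrightarrow> 1 \<le> norm ((T ^^ N) x - x)" using escape[OF nF] by blast
  obtain n0 where n0: "\<And>n. n \<ge> n0 \<Longrightarrow> norm ((T ^^ \<omega> n) x - x) < 1"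
  proof -
    have "\<exists>no. \<forall>n\<ge>no. norm ((T ^^ \<omega> n) x - x) < 1"
      using lim unfolding LIMSEQ_iff by simp
    then show ?thesis using that by blast
  qed
  have "\<omega> (max n0 N0) \<ge> max n0 N0" using seq_suble[OF sm] by blast
  then have "1 \<le> norm ((T ^^ \<omega> (max n0 N0)) x - x)" using N0 by simp
  moreover have "norm ((T ^^ \<omega> (max n0 N0)) x - x) < 1" using n0 by simp
  ultimately show False by simp
qed


lemma P_diff: "P (a - b) = P a - P b"
  using P_add[of "a - b" b] by simp

lemma P_zero: "P 0 = 0"
  using P_scale[of 0 0] by simp

lemma P_sum: "P (\<Sum>i\<in>I. c i *\<^sub>C z i) = (\<Sum>i\<in>I. c i *\<^sub>C P (z i))"
proof (induction I rule: infinite_finite_induct)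
  case (insert a I) then show ?case by (simp add: P_add P_scale)
qed (simp_all add: P_zero)

lemma P_e: assumes j: "j \<in> {1..d}" shows "P (e j) = e j"
proof -
  have "P (e j) = (\<Sum>i=1..d. (if i = j then e i else 0))"
    using P_def estar_e j by (intro trans[OF spec[OF P_def]] sum.cong) (auto simp: scaleC_one)
  also have "\<dots> = e j" using j by (simp add: sum.delta')
  finally show ?thesis .
qed

lemma P_V: assumes "v \<in> V" shows "P v = v"
proof -
  obtain I c where I: "finite I" "I \<subseteq> e ` {1..d}" "v = (\<Sum>u\<in>I. c u *\<^sub>C u)"
    using assms unfolding V_def cspan_def by blast
  have "P v = (\<Sum>u\<in>I. c u *\<^sub>C P u)" using I by (simp add: P_sum[of c "\<lambda>u. u"])
  also have "\<dots> = (\<Sum>u\<in>I. c u *\<^sub>C u)" using I P_e by (intro sum.cong) auto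
  finally show ?thesis using I by simp
qed

lemma P_P: "P (P y) = P y"
  using P_V[OF P_in_V] .

lemma P_alt: "P y = (\<Sum>i<d. estar (Suc i) y *\<^sub>C e (Suc i))"
  using P_def by (simp add: sum.atLeast1_atMost_eq)

lemma P_norm: assumes C1: "\<forall>n\<ge>1. \<forall>y. cmod (estar n y) \<le> C1 * norm y"
  shows "norm (P z) \<le> real d * C1 * norm z"
proof -
  have "norm (P z) \<le> (\<Sum>i=1..d. C1 * norm z)"
    unfolding spec[OF P_def, of z]
  proof (rule sum_norm_le)
    fix i assume i: "i \<in> {1..d}"
    then have "norm (estar i z *\<^sub>C e i) = cmod (estar i z)" using e_norm by (simp add: norm_scaleC)
    also have "\<dots> \<le> C1 * norm z" using C1 i by simp
    finally show "norm (estar i z *\<^sub>C e i) \<le> C1 * norm z" .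
  qed
  then show ?thesis by simp
qed

theorem main: "\<not> dsum_recurrent T d"
proof
  assume rec: "dsum_recurrent T d"
  obtain C1 where C1ge: "C1 \<ge> 1" and C1: "\<forall>n\<ge>1. \<forall>y. cmod (estar n y) \<le> C1 * norm y"
    using estar_C by blast
  define eps where "eps = 1 / (2 * (real d * C1) ^ 2)"
  have dC: "real d * C1 > 0" using d_pos C1ge by simp
  have eps0: "eps > 0" unfolding eps_def using dC d_pos by (intro divide_pos_pos) auto
  obtain x where xrec: "dsum_recurrent_vector T d x"
    and xd: "\<forall>i<d. dist (x i) (e (Suc i)) < eps"
  proof -
    have h: "\<forall>\<epsilon>>0. \<exists>x. dsum_recurrent_vector T d x \<and> (\<forall>i<d. dist (x i) (e (Suc i)) < \<epsilon>)"
      using rec unfolding dsum_recurrent_def by (rule spec)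
    have "\<exists>x. dsum_recurrent_vector T d x \<and> (\<forall>i<d. dist (x i) (e (Suc i)) < eps)"
      using mp[OF spec[OF h, of eps] eps0] .
    then obtain x where "dsum_recurrent_vector T d x" "\<forall>i<d. dist (x i) (e (Suc i)) < eps"
      by (elim exE conjE)
    then show ?thesis by (rule that)
  qed
  obtain \<omega> where sm: "strict_mono \<omega>" and lim: "\<forall>i<d. (\<lambda>n. (T ^^ \<omega> n) (x i)) \<longlonglongrightarrow> x i"
    using xrec unfolding dsum_recurrent_vector_def by auto
  have "V \<noteq> {}" using P_in_V by blast
  then have "V - F \<noteq> {}"
  proof (intro notI)
    assume E: "V - F = {}"
    have "V \<subseteq> {}" using nonF_dense unfolding E closure_empty .
    then show False using \<open>V \<noteq> {}\<close> by blast
  qed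
  then obtain w where w: "w \<in> V" "w \<notin> F" by blast
  define Q where "Q = (\<lambda>u. \<Sum>i<d. estar (Suc i) u *\<^sub>C x i)"
  define f where "f = (\<lambda>u. w + P u - P (Q u))"
  have Qdiff: "Q u - Q v = Q (u - v)" for u v
    unfolding Q_def by (simp add: clin_diff[OF estar_cl] scaleC_diff_left sum_subtractf)
  have key: "norm (P y - P (Q y)) \<le> 1/2 * norm y" for y
  proof -
    have "P y - Q y = (\<Sum>i<d. estar (Suc i) y *\<^sub>C (e (Suc i) - x i))"
      unfolding Q_def P_alt[of y] by (simp add: scaleC_diff_right sum_subtractf)
    moreover have "norm (\<Sum>i<d. estar (Suc i) y *\<^sub>C (e (Suc i) - x i)) \<le> (\<Sum>i<d. C1 * norm y * eps)"
    proof (rule sum_norm_le)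
      fix i assume i: "i \<in> {..<d}"
      have "norm (estar (Suc i) y *\<^sub>C (e (Suc i) - x i)) = cmod (estar (Suc i) y) * norm (e (Suc i) - x i)"
        by (simp add: norm_scaleC)
      also have "\<dots> \<le> (C1 * norm y) * eps"
      proof (rule mult_mono)
        show "cmod (estar (Suc i) y) \<le> C1 * norm y" using C1 by simp
        show "norm (e (Suc i) - x i) \<le> eps" using xd i by (simp add: dist_norm norm_minus_commute less_imp_le)
      qed (use C1ge in auto)
      finally show "norm (estar (Suc i) y *\<^sub>C (e (Suc i) - x i)) \<le> C1 * norm y * eps" .
    qed
    ultimately have h1: "norm (P y - Q y) \<le> real d * (C1 * norm y * eps)" by simp
    have "P y - P (Q y) = P (P y - Q y)" using P_diff P_P by simp
    then have "norm (P y - P (Q y)) \<le> real d * C1 * norm (P y - Q y)"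
      using P_norm[OF C1] by simp
    also have "\<dots> \<le> real d * C1 * (real d * (C1 * norm y * eps))"
      using h1 dC by (intro mult_left_mono) auto
    also have "\<dots> = 1/2 * norm y" unfolding eps_def using dC d_pos C1ge by (simp add: power2_eq_square field_simps)
    finally show ?thesis .
  qed
  have "\<exists>!u. f u = u"
  proof (rule banach_fix_type[of "1/2"])
    show "\<forall>u v. dist (f u) (f v) \<le> 1/2 * dist u v"
    proof (intro allI)
      fix u v
      have "f u - f v = (P u - P v) - (P (Q u) - P (Q v))"
        unfolding f_def by (simp add: algebra_simps)
      also have "\<dots> = P (u - v) - P (Q u - Q v)" by (simp add: P_diff)
      finally have "f u - f v = P (u - v) - P (Q (u - v))" by (simp add: Qdiff)
      then show "dist (f u) (f v) \<le> 1/2 * dist u v" using key[of "u - v"] by (simp add: dist_norm)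
    qed
  qed auto
  then obtain u where fu: "f u = u" by blast
  have e2: "P u = w + P u - P (Q u)"
  proof -
    have "P u = P (f u)" using fu by simp
    also have "\<dots> = P w + P (P u) - P (P (Q u))" unfolding f_def by (simp only: P_add P_diff)
    also have "\<dots> = w + P u - P (Q u)" unfolding P_V[OF w(1)] P_P ..
    finally show ?thesis .
  qed
  have "P u - (w + P u - P (Q u)) = 0" using e2 by (rule iffD1[OF eq_iff_diff_eq_0])
  moreover have "P u - (w + P u - P (Q u)) = P (Q u) - w" by (simp add: algebra_simps)
  ultimately have PQ: "P (Q u) = w" by simp
  define z where "z = Q u"
  have limz: "(\<lambda>n. (T ^^ \<omega> n) z) \<longlonglongrightarrow> z"
  proof -
    have "(\<lambda>n. (T ^^ \<omega> n) z) = (\<lambda>n. \<Sum>i<d. estar (Suc i) u *\<^sub>C (T ^^ \<omega> n) (x i))"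
      unfolding z_def Q_def by (simp add: Tn_sum)
    moreover have "(\<lambda>n. \<Sum>i<d. estar (Suc i) u *\<^sub>C (T ^^ \<omega> n) (x i)) \<longlonglongrightarrow> z"
      unfolding z_def Q_def
      by (intro tendsto_sum bounded_linear.tendsto[OF bounded_linear_scaleC]) (use lim in auto)
    ultimately show ?thesis by simp
  qed
  have Pz: "P z \<notin> F" using PQ w unfolding z_def by simp
  show False by (rule not_rec[OF Pz sm limz])
qed

end

theorem proposition3p7:
  fixes e :: "nat \<Rightarrow> 'a::{complex_normed_vector, banach}"
    and estar :: "nat \<Rightarrow> 'a \<Rightarrow> complex"
    and g :: "nat \<Rightarrow> 'a \<Rightarrow> complex"
    and d :: nat and m :: "nat \<Rightarrow> nat"
    and V F :: "'a set"
    and P S T :: "'a \<Rightarrow> 'a"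
    and lam :: "nat \<Rightarrow> complex"
  assumes separable: "\<exists>D. countable D \<and> closure D = (UNIV :: 'a set)"
    and inf_dim: "\<not> (\<exists>B. finite B \<and> cspan B = (UNIV :: 'a set))"
    and d_pos: "1 \<le> d"
    and estar_dual: "\<forall>n\<ge>1. bounded_clinear (estar n)"
    and e_dense: "closure (cspan (e ` {1..})) = UNIV"
    and biorth: "\<forall>n\<ge>1. \<forall>k\<ge>1. estar n (e k) = (if n = k then 1 else 0)"
    and e_norm: "\<forall>n\<ge>1. norm (e n) = 1"
    and estar_bdd: "\<exists>C. \<forall>n\<ge>1. onorm (estar n) \<le> C"
    and V_def: "V = cspan (e ` {1..d})"
    and P_def: "\<forall>x. P x = (\<Sum>i=1..d. estar i x *\<^sub>C e i)"
    and g_dual: "\<forall>n\<ge>1. bounded_clinear (g n)"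
    and F_sub: "F \<subseteq> V"
    and F_sep: "\<forall>x\<in>F. liminf (\<lambda>n. ereal (cmod (g n x))) = 0"
    and nonF_sep: "\<forall>x\<in>V - F. filterlim (\<lambda>n. cmod (g n x)) at_top sequentially"
    and F_dense: "V \<subseteq> closure F"
    and nonF_dense: "V \<subseteq> closure (V - F)"
    and m_pos: "\<forall>k\<ge>1. 0 < m k"
    and m_incr: "\<forall>k\<ge>1. m k < m (Suc k)"
    and m_dvd: "\<forall>k\<ge>1. m k dvd m (Suc k)"
    and m_sum: "summable (\<lambda>k. real (m (k + d - 1)) / real (m (k + d)) * onorm (g (k + d + 1)))"
    and lam_def: "\<forall>k. lam k = (if k \<le> d then 1 else exp (\<i> * of_real pi / of_nat (m k)))"
    and S_bdd: "bounded_clinear S"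
    and S_diag: "\<forall>k\<ge>1. S (e k) = lam k *\<^sub>C e k"
    and T_def: "\<forall>x. T x = S x + (\<Sum>k. (if d + 1 \<le> k then (1 / of_nat (m (k - 1))) * g k (P x) else 0) *\<^sub>C e k)"
  shows "\<not> dsum_recurrent T d"
proof -
  interpret setting e estar g d m V F P S T lam
    by (rule setting.intro) (fact d_pos estar_dual e_dense biorth e_norm estar_bdd V_def P_def
        g_dual nonF_sep nonF_dense m_pos m_incr m_sum lam_def S_bdd S_diag T_def)+
  show ?thesis by (rule main)
qed

end
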